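(* Let $a,b\in\mathbb{R}$ satisfy $\frac13<a-b<\frac4{\pi^2}$ and $\frac12<a\le\frac2\pi-b$. Suppose moreover that $16ab(b-a)+(a+b)^2>0$ and that \[ x_2=\frac{(a+b)(2b-2a+1)+\sqrt{16ab(b-a)+(a+b)^2}}{2(a-b)^2}\in(0,1). \] Then for all $x\in(0,1)$, \[ \arccos x\ge \frac{(1+x_2)^{b+1/2}(1-x_2)^{1/2-a}}{a+b+(a-b)x_2}\cdot\frac{(1-x)^a}{(1+x)^b}. \]
   Context: $\arccos$ denotes the principal inverse cosine with values in $[0,\pi]$. *)

theory Defs
  imports Complex_Main
begin

end

theory Submission
  imports Defs
begin
lemma alg1:
  fixes r L t d :: real assumes "r > 0" "L \<noteq> 0"
  shows "inverse (-r) - ((inverse r / 2 * (- (2*t))) * L - r*d)/(L*L) = (-(L^2) + t*L + r^2*d)/(r*L^2)"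
  using assms by (simp add: field_simps power2_eq_square)
lemma hderiv:
  fixes s d t :: real
  assumes "-1<t" "t<1" "s + d*t > 0"
  shows "((\<lambda>t. arccos t - sqrt(1-t^2)/(s+d*t)) has_real_derivative
     (-(d^2*t^2 + s*(2*d-1)*t + s^2 - d)/(sqrt(1-t^2)*(s+d*t)^2))) (at t)"
proof -
  have p: "1 - t^2 > 0" using assms by (simp add: abs_square_less_1)
  define r where "r = sqrt(1-t^2)"
  have r: "r > 0" "r^2 = 1 - t^2" using p by (auto simp: r_def)
  have a1: "DERIV arccos t :> inverse (-r)" using DERIV_arccos[OF assms(1,2)] by (simp add: r_def)
  have a2: "DERIV (\<lambda>t. sqrt(1-t^2)) t :> inverse r / 2 * (- (2*t))"
    unfolding r_def using p by (auto intro!: derivative_eq_intros)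
  have a3: "DERIV (\<lambda>t. s+d*t) t :> d" by (auto intro!: derivative_eq_intros)
  have a4: "DERIV (\<lambda>t. arccos t - sqrt(1-t^2)/(s+d*t)) t :>
     inverse (-r) - ((inverse r / 2 * (- (2*t))) * (s+d*t) - sqrt(1-t^2)*d)/((s+d*t)*(s+d*t))"
    by (intro DERIV_diff a1 DERIV_divide a2 a3) (use assms in auto)
  have L: "s+d*t \<noteq> 0" using assms by auto
  have e1: "inverse (-r) - ((inverse r / 2 * (- (2*t))) * (s+d*t) - sqrt(1-t^2)*d)/((s+d*t)*(s+d*t))
     = (-((s+d*t)^2) + t*(s+d*t) + r^2*d)/(r*(s+d*t)^2)"
    unfolding r_def[symmetric] using alg1[OF r(1) L] by simp
  have e2: "-((s+d*t)^2) + t*(s+d*t) + r^2*d = -(d^2*t^2 + s*(2*d-1)*t + s^2 - d)"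
    unfolding r(2) by (simp add: algebra_simps power2_eq_square)
  have e: "inverse (-r) - ((inverse r / 2 * (- (2*t))) * (s+d*t) - sqrt(1-t^2)*d)/((s+d*t)*(s+d*t))
     = (-(d^2*t^2 + s*(2*d-1)*t + s^2 - d)/(sqrt(1-t^2)*(s+d*t)^2))"
    using e1 e2 by (simp add: r_def)
  show ?thesis using a4 e by simp
qed

lemma alg2':
  fixes B C D u v L :: real assumes "u \<noteq> 0" "v \<noteq> 0" "L \<noteq> 0"
  shows "B*(1/u) + C*(1/v*(-1)) - 1/L*D = (B*v*L + C*(-1)*u*L - D*(v*u)) / ((v*u)*L)"
  using assms by (simp add: field_simps)
lemma alg2:
  fixes a b t L :: real assumes "1+t \<noteq> 0" "1-t \<noteq> 0" "L \<noteq> 0"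
  shows "(b+1/2)*(1/(1+t)) + (1/2-a)*(1/(1-t)*(-1)) - 1/L*(a-b)
   = ((b+1/2)*(1-t)*L + (1/2-a)*(-1)*(1+t)*L - (a-b)*((1-t)*(1+t))) / (((1-t)*(1+t))*L)"
  by (rule alg2'[OF assms])

lemma Gderiv:
  fixes a b t :: real
  assumes "-1<t" "t<1" "a+b + (a-b)*t > 0"
  shows "((\<lambda>t. (b+1/2)*ln(1+t) + (1/2-a)*ln(1-t) - ln(a+b+(a-b)*t)) has_real_derivative
     (((a-b)^2*t^2 + (a+b)*(2*(a-b)-1)*t + (a+b)^2 - (a-b))/((1-t^2)*(a+b+(a-b)*t)))) (at t)"
proof -
  have d: "DERIV (\<lambda>t. (b+1/2)*ln(1+t) + (1/2-a)*ln(1-t) - ln(a+b+(a-b)*t)) t :>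
    (b+1/2)*(1/(1+t)) + (1/2-a)*(1/(1-t)*(-1)) - 1/(a+b+(a-b)*t)*(a-b)"
    using assms by (auto intro!: derivative_eq_intros)
  have p1: "1+t \<noteq> 0" "1-t \<noteq> 0" using assms by auto
  have n: "(b+1/2)*(1-t)*(a+b+(a-b)*t) + (1/2-a)*(-1)*(1+t)*(a+b+(a-b)*t) - (a-b)*((1-t)*(1+t))
      = (a-b)^2*t^2 + (a+b)*(2*(a-b)-1)*t + (a+b)^2 - (a-b)"
    unfolding power2_eq_square by algebra
  have m: "(1-t)*(1+t) = 1 - t^2" by (simp add: algebra_simps power2_eq_square)
  show ?thesis using d alg2[OF p1, of "a+b+(a-b)*t" b a] assms(3) n m by simp
qed

lemma alg3:
  fixes a b u v r A :: real assumes "u \<noteq> 0" "v \<noteq> 0" "r \<noteq> 0" "A \<noteq> 0"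
  shows "inverse (-r) / A + b*(1/u) - a*(1/v*(-1)) = (b*v + a*u)/(v*u) - 1/(r*A)"
  using assms by (simp add: field_simps)
lemma alg4:
  fixes L r A :: real assumes "L \<noteq> 0" "r \<noteq> 0" "A \<noteq> 0"
  shows "L*(A - r/L)/(r^2*A) = L/r^2 - 1/(r*A)"
  using assms by (simp add: field_simps power2_eq_square)
lemma Fderiv:
  fixes a b t :: real
  assumes "-1<t" "t<1" "a+b + (a-b)*t > 0"
  shows "((\<lambda>t. ln (arccos t) + b*ln(1+t) - a*ln(1-t)) has_real_derivative
     ((a+b+(a-b)*t) * (arccos t - sqrt(1-t^2)/(a+b+(a-b)*t)) / ((1-t^2)*arccos t))) (at t)"
proof -
  have p: "1 - t^2 > 0" using assms by (simp add: abs_square_less_1)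
  define r where "r = sqrt(1-t^2)"
  have r: "r > 0" "r^2 = 1 - t^2" using p by (auto simp: r_def)
  have A: "arccos t > 0" using arccos_lt_bounded assms by auto
  have a1: "DERIV arccos t :> inverse (-r)" using DERIV_arccos[OF assms(1,2)] by (simp add: r_def)
  have d: "DERIV (\<lambda>t. ln (arccos t) + b*ln(1+t) - a*ln(1-t)) t :>
     inverse (-r) / arccos t + b*(1/(1+t)) - a*(1/(1-t)*(-1))"
    using assms A unfolding r_def by (auto intro!: derivative_eq_intros)
  have p1: "1+t \<noteq> 0" "1-t \<noteq> 0" using assms by auto
  have e: "inverse (-r) / arccos t + b*(1/(1+t)) - a*(1/(1-t)*(-1))
     = (a+b+(a-b)*t)/(1-t^2) - 1/(r*arccos t)"
    using alg3[OF p1 _ _, of r "arccos t" b a] r A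
    by (simp add: algebra_simps power2_eq_square)
  have e2: "(a+b+(a-b)*t) * (arccos t - r/(a+b+(a-b)*t)) / ((1-t^2)*arccos t)
       = (a+b+(a-b)*t)/(1-t^2) - 1/(r*arccos t)"
    using alg4[of "a+b+(a-b)*t" r "arccos t"] assms(3) r A unfolding r(2)[symmetric] by simp
  have e3: "(a+b+(a-b)*t) * (arccos t - sqrt(1-t^2)/(a+b+(a-b)*t)) / ((1-t^2)*arccos t)
       = (a+b+(a-b)*t)/(1-t^2) - 1/(r*arccos t)"
    using e2 unfolding r_def .
  show ?thesis using d e e3 unfolding r_def by simp
qed

lemma qfac:
  fixes e p q t :: real assumes "e \<noteq> 0"
  shows "e*(t-(p-q)/(2*e))*(t-(p+q)/(2*e)) = e*t^2 - p*t + (p^2-q^2)/(4*e)"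
  using assms by (simp add: field_simps power2_eq_square)

theorem theorem2:
  fixes a b x\<^sub>2 :: real
  assumes h1: "1/3 < a - b" and h2: "a - b < 4 / pi^2"
    and h3: "1/2 < a" and h4: "a \<le> 2/pi - b"
    and hdisc: "16*a*b*(b - a) + (a + b)^2 > 0"
    and hx2: "x\<^sub>2 = ((a + b)*(2*b - 2*a + 1) + sqrt (16*a*b*(b - a) + (a + b)^2)) / (2*(a - b)^2)"
    and hx2I: "0 < x\<^sub>2" "x\<^sub>2 < 1"
  shows "\<forall>x::real. 0 < x \<and> x < 1 \<longrightarrow>
    arccos x \<ge> ((1 + x\<^sub>2) powr (b + 1/2) * (1 - x\<^sub>2) powr (1/2 - a)) / (a + b + (a - b)*x\<^sub>2)
                 * ((1 - x) powr a / (1 + x) powr b)"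
proof -
  define L where "L t = a+b+(a-b)*t" for t :: real
  define Q where "Q t = (a-b)^2*t^2 + (a+b)*(2*(a-b)-1)*t + (a+b)^2 - (a-b)" for t :: real
  define h where "h t = arccos t - sqrt(1-t^2)/(a+b+(a-b)*t)" for t :: real
  define G where "G t = (b+1/2)*ln(1+t) + (1/2-a)*ln(1-t) - ln(a+b+(a-b)*t)" for t :: real
  define F where "F t = ln (arccos t) + b*ln(1+t) - a*ln(1-t)" for t :: real
  have "1/2 \<le> pi/6" using sin_x_le_x[of "pi/6"] sin_30 by simp
  then have pi3: "pi \<ge> 3" by simp
  have "pi^2 \<ge> 3^2" using pi3 by (intro power_mono) auto
  then have "4/pi^2 < 1/2" by (simp add: field_simps)
  with h2 have dlt: "a - b < 1/2" by linarith
  have bpos: "b > 0" using h3 dlt by simp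
  have Lpos: "\<And>t. t > -1 \<Longrightarrow> L t > 0"
  proof -
    fix t :: real assume "t > -1"
    have "(a-b)*t > (a-b)*(-1)" using h1 \<open>t > -1\<close> by (intro mult_strict_left_mono) auto
    then show "L t > 0" unfolding L_def using bpos by simp
  qed
  have Lpos': "\<And>t. t > -1 \<Longrightarrow> a+b+(a-b)*t > 0" using Lpos unfolding L_def .
  define D where "D = 16*a*b*(b - a) + (a + b)^2"
  define sq where "sq = sqrt D"
  define p where "p = (a + b)*(2*b - 2*a + 1)"
  define e where "e = (a-b)^2"
  have epos: "e > 0" using h1 unfolding e_def by simp
  have sqpos: "sq > 0" and sq2: "sq^2 = D" using hdisc unfolding sq_def D_def by auto
  define x1 where "x1 = (p - sq)/(2*e)"
  have x2d: "x\<^sub>2 = (p + sq)/(2*e)" using hx2 unfolding p_def sq_def D_def e_def by simp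
  have x12: "x1 < x\<^sub>2" unfolding x1_def x2d using sqpos epos by (simp add: divide_strict_right_mono)
  have id1: "p^2 - D = 4*e*((a+b)^2 - (a-b))"
    unfolding p_def D_def e_def power2_eq_square by algebra
  have Qfac: "Q t = e*(t-x1)*(t-x\<^sub>2)" for t
  proof -
    have "e*(t-x1)*(t-x\<^sub>2) = e*t^2 - p*t + (p^2-sq^2)/(4*e)"
      unfolding x1_def x2d using qfac epos by simp
    also have "(p^2-sq^2)/(4*e) = (a+b)^2 - (a-b)" using id1 sq2 epos by simp
    finally show ?thesis unfolding Q_def e_def p_def by (simp add: algebra_simps)
  qed
  have Qlt: "Q t > 0" if "t < x1" for t
  proof -
    have "(t-x1)*(t-x\<^sub>2) > 0" using that x12 by (intro mult_neg_neg) auto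
    then show ?thesis unfolding Qfac using epos by (simp add: mult.assoc)
  qed
  have Qgt: "Q t > 0" if "t > x\<^sub>2" for t
  proof -
    have "(t-x1)*(t-x\<^sub>2) > 0" using that x12 by (intro mult_pos_pos) auto
    then show ?thesis unfolding Qfac using epos by (simp add: mult.assoc)
  qed
  have Qmid: "Q t < 0" if "x1 < t" "t < x\<^sub>2" for t
  proof -
    have "(t-x1)*(t-x\<^sub>2) < 0" using that by (intro mult_pos_neg) auto
    then show ?thesis unfolding Qfac using epos by (simp add: mult.assoc mult_pos_neg)
  qed
  have hD: "DERIV h t :> -(Q t)/(sqrt(1-t^2)*(L t)^2)" if "-1 < t" "t < 1" for t
    using hderiv[of t "a+b" "a-b"] that Lpos'[of t] unfolding h_def Q_def L_def by simp
  have GD: "DERIV G t :> Q t/((1-t^2)*L t)" if "-1 < t" "t < 1" for t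
    using Gderiv[of t a b] that Lpos'[of t] unfolding G_def Q_def L_def by simp
  have FD: "DERIV F t :> L t * h t/((1-t^2)*arccos t)" if "-1 < t" "t < 1" for t
    using Fderiv[of t a b] that Lpos'[of t] unfolding F_def h_def L_def by simp
  have omt: "1-t^2 > 0" if "-1 < t" "t < 1" for t :: real
  proof -
    have "(1-t)*(1+t) > 0" using that by (intro mult_pos_pos) auto
    then show ?thesis by (simp add: algebra_simps power2_eq_square)
  qed
  have sqp: "sqrt(1-t^2) > 0" if "-1 < t" "t < 1" for t :: real using omt[OF that] by simp
  have pd1: "sqrt(1-t^2)*(L t)^2 > 0" if "-1 < t" "t < 1" for t :: real
    using sqp[OF that] Lpos[OF that(1)] by simp
  have pd2: "(1-t^2)*L t > 0" if "-1 < t" "t < 1" for t :: real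
    using omt[OF that] Lpos[OF that(1)] by simp
  have h0: "h 0 \<le> 0"
  proof -
    have "(a+b)*pi \<le> 2" using h4 pi_gt_zero by (simp add: field_simps)
    then have "pi/2 \<le> 1/(a+b)" using bpos h3 by (simp add: field_simps)
    then show ?thesis unfolding h_def by simp
  qed
  have C1: "x1 < c" if hc: "0 < c" "c < 1" "h c \<ge> 0" for c
  proof (rule ccontr)
    assume "\<not> x1 < c"
    obtain z where z: "0 < z" "z < c" "h c - h 0 = (c - 0) * (-(Q z)/(sqrt(1-z^2)*(L z)^2))"
      using MVT2[of 0 c h "\<lambda>t. -(Q t)/(sqrt(1-t^2)*(L t)^2)"] hD hc by force
    have "Q z > 0" using Qlt z \<open>\<not> x1 < c\<close> by simp
    moreover have "sqrt(1-z^2)*(L z)^2 > 0" using pd1[of z] z hc by simp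
    ultimately have "-(Q z)/(sqrt(1-z^2)*(L z)^2) < 0" by (simp add: divide_pos_pos)
    then have "(c - 0) * (-(Q z)/(sqrt(1-z^2)*(L z)^2)) < 0" using hc by (intro mult_pos_neg) auto
    then have "h c - h 0 < 0" using z(3) by linarith
    then show False using h0 hc by simp
  qed
  have K: "G c \<ge> G x\<^sub>2" if hc: "0 < c" "c < 1" "h c \<ge> 0" for c
  proof -
    have xc: "x1 < c" using C1 hc .
    consider "c < x\<^sub>2" | "c = x\<^sub>2" | "c > x\<^sub>2" by linarith
    then show ?thesis
    proof cases
      case 1
      obtain z where z: "c < z" "z < x\<^sub>2" "G x\<^sub>2 - G c = (x\<^sub>2 - c) * (Q z/((1-z^2)*L z))"
        using MVT2[of c "x\<^sub>2" G "\<lambda>t. Q t/((1-t^2)*L t)"] GD hc hx2I 1 by force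
      have "Q z < 0" using Qmid z xc by simp
      moreover have "(1-z^2)*L z > 0" using pd2[of z] z hc hx2I by simp
      ultimately have "Q z/((1-z^2)*L z) < 0" by (simp add: divide_neg_pos)
      then have "(x\<^sub>2 - c) * (Q z/((1-z^2)*L z)) < 0" using 1 by (intro mult_pos_neg) auto
      then have "G x\<^sub>2 - G c < 0" using z(3) by linarith
      then show ?thesis by simp
    next
      case 2 then show ?thesis by simp
    next
      case 3
      obtain z where z: "x\<^sub>2 < z" "z < c" "G c - G x\<^sub>2 = (c - x\<^sub>2) * (Q z/((1-z^2)*L z))"
        using MVT2[of "x\<^sub>2" c G "\<lambda>t. Q t/((1-t^2)*L t)"] GD hc hx2I 3 by force
      have "Q z > 0" using Qgt z by simp
      moreover have "(1-z^2)*L z > 0" using pd2[of z] z hc hx2I by simp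
      ultimately have "Q z/((1-z^2)*L z) > 0" by (simp add: divide_pos_pos)
      then have "(c - x\<^sub>2) * (Q z/((1-z^2)*L z)) > 0" using 3 by (intro mult_pos_pos) auto
      then have "G c - G x\<^sub>2 > 0" using z(3) by linarith
      then show ?thesis by simp
    qed
  qed
  have P: "h y > 0" if hy: "x\<^sub>2 \<le> y" "y < 1" for y
  proof -
    have y0: "y > 0" using hy hx2I by simp
    have cont: "continuous_on {y..1} h"
    proof -
      have Lne: "\<forall>t\<in>{y..1}. a+b+(a-b)*t \<noteq> 0"
      proof
        fix t assume "t \<in> {y..1}"
        then have "t > -1" using y0 by auto
        then show "a+b+(a-b)*t \<noteq> 0" using Lpos'[of t] by simp
      qed
      have Ab: "\<forall>t\<in>{y..1}. -1 \<le> t \<and> t \<le> 1" using y0 by auto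
      have c1: "continuous_on {y..1} arccos"
        by (rule continuous_on_subset[OF continuous_on_arccos']) (use y0 in auto)
      have c2: "continuous_on {y..1} (\<lambda>t. sqrt(1-t^2))" by (intro continuous_intros)
      have c3: "continuous_on {y..1} (\<lambda>t. a+b+(a-b)*t)" by (intro continuous_intros)
      have "continuous_on {y..1} (\<lambda>t. arccos t - sqrt(1-t^2)/(a+b+(a-b)*t))"
        by (rule continuous_on_diff[OF c1 continuous_on_divide[OF c2 c3]]) (use Lne in auto)
      then show ?thesis unfolding h_def by simp
    qed
    have dif: "h differentiable (at z)" if hz: "y < z" "z < 1" for z
      using hD[of z] hz y0 real_differentiable_def by force
    obtain l z where lz: "y < z" "z < 1" "DERIV h z :> l" "h 1 - h y = (1 - y) * l"
      using MVT[OF hy(2) cont dif] by blast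
    have "l = -(Q z)/(sqrt(1-z^2)*(L z)^2)" using DERIV_unique lz(3) hD[of z] lz y0 by simp
    moreover have "Q z > 0" using Qgt lz hy by simp
    moreover have "sqrt(1-z^2)*(L z)^2 > 0" using pd1[of z] lz y0 by simp
    ultimately have "l < 0" by (simp add: divide_pos_pos)
    moreover have "h 1 = 0" unfolding h_def by simp
    ultimately have "(1 - y) * l < 0" "h 1 = 0" using hy by (auto intro: mult_pos_neg)
    then show ?thesis using lz(4) by linarith
  qed
  have FG: "F c \<ge> G c" if hc: "0 < c" "c < 1" "h c \<ge> 0" for c
  proof -
    have Lc: "L c > 0" using Lpos hc by simp
    have A: "arccos c \<ge> sqrt(1-c^2)/L c" using hc unfolding h_def L_def by simp
    have sp: "sqrt(1-c^2)/L c > 0" using sqp hc Lc by simp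
    have "ln (arccos c) \<ge> ln (sqrt(1-c^2)/L c)" using A sp by simp
    also have "ln (sqrt(1-c^2)/L c) = ln (1-c^2)/2 - ln (L c)"
      using sqp[of c] Lc hc omt[of c] by (simp add: ln_divide_pos ln_sqrt)
    also have "ln (1-c^2) = ln(1-c) + ln(1+c)"
    proof -
      have "1-c^2 = (1-c)*(1+c)" by (simp add: algebra_simps power2_eq_square)
      then show ?thesis using hc by (simp add: ln_mult)
    qed
    finally show ?thesis unfolding F_def G_def L_def by (simp add: algebra_simps)
  qed
  have main: "F x \<ge> G x\<^sub>2" if x: "0 < x" "x < 1" for x
  proof (cases "h x \<ge> 0")
    case True then show ?thesis using FG K x by force
  next
    case False
    have xx2: "x < x\<^sub>2" using P[of x] False x by force
    have cF: "\<forall>t. x \<le> t \<and> t \<le> x\<^sub>2 \<longrightarrow> isCont F t"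
    proof (intro allI impI)
      fix t assume "x \<le> t \<and> t \<le> x\<^sub>2"
      then have "-1 < t" "t < 1" using x hx2I by auto
      then show "isCont F t" using FD DERIV_isCont by blast
    qed
    obtain M where M: "\<forall>t. x \<le> t \<and> t \<le> x\<^sub>2 \<longrightarrow> M \<le> F t" "\<exists>t. x \<le> t \<and> t \<le> x\<^sub>2 \<and> F t = M"
      using isCont_eq_Lb[OF less_imp_le[OF xx2] cF] by blast
    then obtain c where c: "x \<le> c" "c \<le> x\<^sub>2" "F c = M" by blast
    have Fxc: "F x \<ge> F c" using M c xx2 by simp
    consider "c = x" | "c = x\<^sub>2" | "x < c \<and> c < x\<^sub>2" using c by linarith
    then show ?thesis
    proof cases
      case 1
      have q1: "L x * h x < 0" using Lpos[of x] False x by (intro mult_pos_neg) auto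
      have q2: "(1-x^2)*arccos x > 0" using omt[of x] arccos_lt_bounded[of x] x by simp
      have "L x * h x/((1-x^2)*arccos x) < 0" using q1 q2 by (rule divide_neg_pos)
      then obtain dl where dl: "dl > 0" "\<forall>k>0. k < dl \<longrightarrow> F x > F (x + k)"
        using DERIV_neg_dec_right[OF FD[of x]] x by force
      define k where "k = min (dl/2) (x\<^sub>2 - x)"
      have "k > 0" "k < dl" using dl xx2 by (auto simp: k_def)
      then have "F x > F (x + k)" using dl by simp
      moreover have "F (x+k) \<ge> M" using M(1) \<open>k>0\<close> by (auto simp: k_def)
      ultimately show ?thesis using 1 c by simp
    next
      case 2
      have "h x\<^sub>2 > 0" using P hx2I by simp
      then show ?thesis using FG[of "x\<^sub>2"] hx2I Fxc 2 by simp
    next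
      case 3
      define r where "r = min (c - x) (x\<^sub>2 - c)"
      have r: "r > 0" using 3 by (simp add: r_def)
      have "\<forall>y. \<bar>c - y\<bar> < r \<longrightarrow> F c \<le> F y" using M(1) c by (auto simp: r_def abs_if)
      then have z: "L c * h c/((1-c^2)*arccos c) = 0"
        using DERIV_local_min[OF FD[of c] r] 3 x hx2I by simp
      have "L c > 0" "1-c^2 > 0" "arccos c > 0"
        using Lpos[of c] omt[of c] arccos_lt_bounded[of c] 3 x hx2I by auto
      then have "h c = 0" using z by simp
      then have "F c \<ge> G x\<^sub>2" using FG[of c] K[of c] 3 x hx2I by force
      then show ?thesis using Fxc by simp
    qed
  qed
  show ?thesis
  proof (intro allI impI)
    fix x :: real assume x: "0 < x \<and> x < 1"
    define C where "C = ((1 + x\<^sub>2) powr (b + 1/2) * (1 - x\<^sub>2) powr (1/2 - a)) / (a + b + (a - b)*x\<^sub>2)"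
    have L2: "a + b + (a - b)*x\<^sub>2 > 0" using Lpos'[of "x\<^sub>2"] hx2I by simp
    have Cpos: "C > 0" unfolding C_def using hx2I L2 by simp
    have lnC: "ln C = G x\<^sub>2" unfolding C_def G_def using hx2I L2
      by (simp add: ln_divide_pos ln_mult)
    have A: "arccos x > 0" using arccos_lt_bounded[of x] x by simp
    have Pp: "(1-x) powr a > 0" "(1+x) powr b > 0" using x by auto
    have "ln (C * ((1 - x) powr a / (1 + x) powr b)) = G x\<^sub>2 + a*ln(1-x) - b*ln(1+x)"
      using Cpos Pp lnC x by (simp add: ln_mult ln_divide_pos)
    also have "\<dots> \<le> F x + a*ln(1-x) - b*ln(1+x)" using main x by simp
    also have "\<dots> = ln (arccos x)" unfolding F_def by simp
    finally have "ln (C * ((1 - x) powr a / (1 + x) powr b)) \<le> ln (arccos x)" .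
    then have "C * ((1 - x) powr a / (1 + x) powr b) \<le> arccos x"
      using Cpos Pp A by simp
    then show "arccos x \<ge> ((1 + x\<^sub>2) powr (b + 1/2) * (1 - x\<^sub>2) powr (1/2 - a)) / (a + b + (a - b)*x\<^sub>2)
                 * ((1 - x) powr a / (1 + x) powr b)" unfolding C_def .
  qed
qed
end
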